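(* Let $\Lambda=(\lambda_i)_{i=0}^\infty$ be a strictly increasing sequence of non-negative reals with $\lambda_0=0$ and $\sum_{i=1}^\infty 1/\lambda_i<\infty$, and let $M(\Lambda)=\overline{\operatorname{span}}\{t^{\lambda_i}: i\geq 0\}\subseteq C[0,1]$ with the sup-norm. Then $M(\Lambda)$ is not almost square.
   Context: $C[0,1]$ is the space of real-valued continuous functions on $[0,1]$ with the sup-norm. A Banach space $X$ with closed unit ball $B_X$ and unit sphere $S_X$ is almost square if for every finite collection $x_1,\dots,x_k\in S_X$ there exists a sequence $(y_n)$ in $B_X$ such that $\|y_n\|\to 1$ and $\|x_i\pm y_n\|\to 1$ for every $i\in\{1,\dots,k\}$. *)

theory Defs
  imports "HOL-Analysis.Analysis"
begin

text \<open>C[0,1] is modelled by functions real => real that are continuous on [0,1];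
  only their values on [0,1] matter, via the sup-norm below.\<close>

definition C01 :: "(real \<Rightarrow> real) set" where
  "C01 = {f. continuous_on {0..1} f}"

definition supnorm :: "(real \<Rightarrow> real) \<Rightarrow> real" where
  "supnorm f = (SUP t\<in>{0..1}. \<bar>f t\<bar>)"

text \<open>The monomial t^a on [0,1], with the convention t^0 = 1 (note 0 powr 0 = 0 in Isabelle).\<close>
definition mon :: "real \<Rightarrow> real \<Rightarrow> real" where
  "mon a t = (if a = 0 then 1 else t powr a)"

definition Muntz_space :: "(nat \<Rightarrow> real) \<Rightarrow> (real \<Rightarrow> real) set" where
  "Muntz_space \<Lambda> = {f \<in> C01. \<forall>\<epsilon>>0. \<exists>n c. supnorm (\<lambda>t. f t - (\<Sum>i<n. c i * mon (\<Lambda> i) t)) < \<epsilon>}"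

definition almost_square :: "(real \<Rightarrow> real) set \<Rightarrow> bool" where
  "almost_square X \<longleftrightarrow>
    (\<forall>F. finite F \<and> F \<subseteq> X \<and> (\<forall>x\<in>F. supnorm x = 1) \<longrightarrow>
      (\<exists>y :: nat \<Rightarrow> real \<Rightarrow> real.
         (\<forall>n. y n \<in> X \<and> supnorm (y n) \<le> 1) \<and>
         (\<lambda>n. supnorm (y n)) \<longlonglongrightarrow> 1 \<and>
         (\<forall>x\<in>F. (\<lambda>n. supnorm (\<lambda>t. x t + y n t)) \<longlonglongrightarrow> 1 \<and> (\<lambda>n. supnorm (\<lambda>t. x t - y n t)) \<longlonglongrightarrow> 1)))"

end

theory Submission
  imports Defs
begin

lemma supnorm_ge:
  assumes "continuous_on {0..1} g" "t \<in> {0..1}"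
  shows "\<bar>g t\<bar> \<le> supnorm g"
proof -
  have "continuous_on {0..1} (\<lambda>t. \<bar>g t\<bar>)"
    using assms(1) by (intro continuous_intros)
  then have "compact ((\<lambda>t. \<bar>g t\<bar>) ` {0..1})"
    by (intro compact_continuous_image) auto
  then have "bdd_above ((\<lambda>t. \<bar>g t\<bar>) ` {0..1})"
    by (simp add: bounded_imp_bdd_above compact_imp_bounded)
  then show ?thesis unfolding supnorm_def using assms(2) by (rule cSUP_upper[rotated])
qed

lemma supnorm_le:
  assumes "\<And>t. t \<in> {0..1} \<Longrightarrow> \<bar>g t\<bar> \<le> B"
  shows "supnorm g \<le> B"
  unfolding supnorm_def by (rule cSUP_least) (use assms in auto)

theorem mainTheorem5:
  fixes \<Lambda> :: "nat \<Rightarrow> real"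
  assumes "strict_mono \<Lambda>"
    and "\<Lambda> 0 = 0"
    and "\<forall>i. \<Lambda> i \<ge> 0"
    and "summable (\<lambda>i. 1 / \<Lambda> (Suc i))"
  shows "\<not> almost_square (Muntz_space \<Lambda>)"
proof
  assume as: "almost_square (Muntz_space \<Lambda>)"
  define one :: "real \<Rightarrow> real" where "one = (\<lambda>t. 1)"
  have n1: "supnorm one = 1" unfolding supnorm_def one_def by simp
  have m1: "one \<in> Muntz_space \<Lambda>"
    unfolding Muntz_space_def C01_def
  proof (intro CollectI conjI allI impI)
    show "continuous_on {0..1} one" unfolding one_def by (intro continuous_intros)
    fix e :: real assume "e > 0"
    show "\<exists>n c. supnorm (\<lambda>t. one t - (\<Sum>i<n. c i * mon (\<Lambda> i) t)) < e"
      by (rule exI[of _ 1], rule exI[of _ "\<lambda>_. 1"])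
         (simp add: one_def mon_def assms(2) supnorm_def \<open>e > 0\<close>)
  qed
  obtain y where y: "\<And>n. y n \<in> Muntz_space \<Lambda>" "(\<lambda>n. supnorm (y n)) \<longlonglongrightarrow> 1"
    "(\<lambda>n. supnorm (\<lambda>t. one t + y n t)) \<longlonglongrightarrow> 1" "(\<lambda>n. supnorm (\<lambda>t. one t - y n t)) \<longlonglongrightarrow> 1"
    using as[unfolded almost_square_def, rule_format, of "{one}"] n1 m1 by auto
  have le: "supnorm (y n) \<le> max (supnorm (\<lambda>t. one t + y n t)) (supnorm (\<lambda>t. one t - y n t)) - 1" for n
  proof (rule supnorm_le)
    fix t :: real assume t: "t \<in> {0..1}"
    have c: "continuous_on {0..1} (y n)" using y(1)[of n] by (simp add: Muntz_space_def C01_def)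
    have "\<bar>one t + y n t\<bar> \<le> supnorm (\<lambda>t. one t + y n t)"
      by (rule supnorm_ge[OF _ t]) (use c in \<open>simp add: one_def, intro continuous_intros\<close>)
    moreover have "\<bar>one t - y n t\<bar> \<le> supnorm (\<lambda>t. one t - y n t)"
      by (rule supnorm_ge[OF _ t]) (use c in \<open>simp add: one_def, intro continuous_intros\<close>)
    ultimately show "\<bar>y n t\<bar> \<le> max (supnorm (\<lambda>t. one t + y n t)) (supnorm (\<lambda>t. one t - y n t)) - 1"
      by (simp add: one_def abs_if split: if_splits) linarith
  qed
  have "(\<lambda>n. max (supnorm (\<lambda>t. one t + y n t)) (supnorm (\<lambda>t. one t - y n t)) - 1) \<longlonglongrightarrow> max 1 1 - 1"
    by (intro tendsto_intros y(3) y(4))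
  then have "1 \<le> max 1 1 - (1::real)"
    by (rule LIMSEQ_le[OF y(2)]) (use le in auto)
  then show False by simp
qed

end
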